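(* Consider the system $$\dot S_p=b_p-\Big(\sum_{q=1}^P\sum_{v=1}^V\beta_{pqv}I_{qv}+d_p\Big)S_p,\quad \dot L_{pv}=\sum_{q=1}^P\beta_{pqv}I_{qv}S_p-(\varepsilon_{pv}+d_p)L_{pv},$$ $$\dot I_{pv}=\varepsilon_{pv}L_{pv}-(\gamma_{pv}+d_p)I_{pv},\quad \dot R_p=\sum_{v=1}^V\gamma_{pv}I_{pv}-d_pR_p,$$ for $p=1,\dots,P$, $v=1,\dots,V$. If $\mathcal R_0<1$, then the disease-free equilibrium $E_0$ ($S_p=b_p/d_p$ for all $p$, all $L_{pv},I_{pv},R_p$ equal to $0$) is globally asymptotically stable in $$\Omega=\Big\{(S_p,L_{pv},I_{pv},R_p)\in\mathbb R_{\ge0}^{2P(V+1)}:\ N_p:=S_p+\sum_{v=1}^V(L_{pv}+I_{pv})+R_p\le \frac{b_p}{d_p},\ p=1,\dots,P\Big\}.$$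
   Context: Parameters: $b_p>0$, $d_p>0$, $\varepsilon_{pv}>0$, $\gamma_{pv}>0$, $\beta_{pqv}\ge0$. Let $S_p^0=b_p/d_p$. For each pathogen $v$, let $\mathcal B_v$ be the $P\times P$ matrix with entries $(\mathcal B_v)_{pq}=\dfrac{\beta_{pqv}\varepsilon_{qv}S_p^0}{(\varepsilon_{qv}+d_q)(\gamma_{qv}+d_q)}$, $\mathcal R_0^v=\rho(\mathcal B_v)$ (spectral radius), and $\mathcal R_0=\max_{v}\mathcal R_0^v$. *)

theory Defs
  imports "HOL-Analysis.Analysis" "Jordan_Normal_Form.Spectral_Radius"
begin

text \<open>Indices: hosts p \<in> {0..<P}, pathogens v \<in> {0..<V}.\<close>

definition S0 :: "(nat \<Rightarrow> real) \<Rightarrow> (nat \<Rightarrow> real) \<Rightarrow> nat \<Rightarrow> real" where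
  "S0 b d p = b p / d p"

definition Bmat :: "nat \<Rightarrow> (nat \<Rightarrow> real) \<Rightarrow> (nat \<Rightarrow> real) \<Rightarrow> (nat \<Rightarrow> nat \<Rightarrow> real)
    \<Rightarrow> (nat \<Rightarrow> nat \<Rightarrow> real) \<Rightarrow> (nat \<Rightarrow> nat \<Rightarrow> nat \<Rightarrow> real) \<Rightarrow> nat \<Rightarrow> complex mat" where
  "Bmat P b d eps gam beta v = mat P P (\<lambda>(p,q). complex_of_real
     (beta p q v * eps q v * S0 b d p / ((eps q v + d q) * (gam q v + d q))))"

definition R0v where
  "R0v P b d eps gam beta v = spectral_radius (Bmat P b d eps gam beta v)"

definition R0 where
  "R0 P V b d eps gam beta = Max ((\<lambda>v. R0v P b d eps gam beta v) ` {..<V})"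

definition is_solution ::
  "nat \<Rightarrow> nat \<Rightarrow> (nat \<Rightarrow> real) \<Rightarrow> (nat \<Rightarrow> real) \<Rightarrow> (nat \<Rightarrow> nat \<Rightarrow> real)
    \<Rightarrow> (nat \<Rightarrow> nat \<Rightarrow> real) \<Rightarrow> (nat \<Rightarrow> nat \<Rightarrow> nat \<Rightarrow> real)
    \<Rightarrow> (real \<Rightarrow> nat \<Rightarrow> real) \<Rightarrow> (real \<Rightarrow> nat \<Rightarrow> nat \<Rightarrow> real)
    \<Rightarrow> (real \<Rightarrow> nat \<Rightarrow> nat \<Rightarrow> real) \<Rightarrow> (real \<Rightarrow> nat \<Rightarrow> real) \<Rightarrow> bool" where
  "is_solution P V b d eps gam beta S L I R \<longleftrightarrow>
    (\<forall>t\<ge>0. \<forall>p<P.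
      ((\<lambda>\<tau>. S \<tau> p) has_real_derivative
         (b p - ((\<Sum>q<P. \<Sum>v<V. beta p q v * I t q v) + d p) * S t p)) (at t within {0..}) \<and>
      ((\<lambda>\<tau>. R \<tau> p) has_real_derivative
         ((\<Sum>v<V. gam p v * I t p v) - d p * R t p)) (at t within {0..}) \<and>
      (\<forall>v<V.
        ((\<lambda>\<tau>. L \<tau> p v) has_real_derivative
           ((\<Sum>q<P. beta p q v * I t q v) * S t p - (eps p v + d p) * L t p v)) (at t within {0..}) \<and>
        ((\<lambda>\<tau>. I \<tau> p v) has_real_derivative
           (eps p v * L t p v - (gam p v + d p) * I t p v)) (at t within {0..})))"

definition in_Omega ::
  "nat \<Rightarrow> nat \<Rightarrow> (nat \<Rightarrow> real) \<Rightarrow> (nat \<Rightarrow> real)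
    \<Rightarrow> (nat \<Rightarrow> real) \<Rightarrow> (nat \<Rightarrow> nat \<Rightarrow> real) \<Rightarrow> (nat \<Rightarrow> nat \<Rightarrow> real) \<Rightarrow> (nat \<Rightarrow> real) \<Rightarrow> bool" where
  "in_Omega P V b d s l i r \<longleftrightarrow>
    (\<forall>p<P. s p \<ge> 0 \<and> r p \<ge> 0 \<and> (\<forall>v<V. l p v \<ge> 0 \<and> i p v \<ge> 0) \<and>
       s p + (\<Sum>v<V. l p v + i p v) + r p \<le> b p / d p)"

definition dist_E0 ::
  "nat \<Rightarrow> nat \<Rightarrow> (nat \<Rightarrow> real) \<Rightarrow> (nat \<Rightarrow> real)
    \<Rightarrow> (nat \<Rightarrow> real) \<Rightarrow> (nat \<Rightarrow> nat \<Rightarrow> real) \<Rightarrow> (nat \<Rightarrow> nat \<Rightarrow> real) \<Rightarrow> (nat \<Rightarrow> real) \<Rightarrow> real" where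
  "dist_E0 P V b d s l i r =
    (\<Sum>p<P. \<bar>s p - S0 b d p\<bar> + (\<Sum>v<V. \<bar>l p v\<bar> + \<bar>i p v\<bar>) + \<bar>r p\<bar>)"

definition E0_GAS_in_Omega where
  "E0_GAS_in_Omega P V b d eps gam beta \<longleftrightarrow>
    (\<forall>\<epsilon>>0. \<exists>\<delta>>0. \<forall>S L I R.
        is_solution P V b d eps gam beta S L I R \<longrightarrow>
        in_Omega P V b d (S 0) (L 0) (I 0) (R 0) \<longrightarrow>
        dist_E0 P V b d (S 0) (L 0) (I 0) (R 0) < \<delta> \<longrightarrow>
        (\<forall>t\<ge>0. dist_E0 P V b d (S t) (L t) (I t) (R t) < \<epsilon>)) \<and>
    (\<forall>S L I R.
        is_solution P V b d eps gam beta S L I R \<longrightarrow>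
        in_Omega P V b d (S 0) (L 0) (I 0) (R 0) \<longrightarrow>
        ((\<lambda>t. dist_E0 P V b d (S t) (L t) (I t) (R t)) \<longlongrightarrow> 0) at_top)"

end

theory Submission
  imports Defs "HOL-Real_Asymp.Real_Asymp"
begin


lemma decay:
  fixes f f' :: "real \<Rightarrow> real" and k T t :: real
  assumes der: "\<And>t. 0 \<le> t \<Longrightarrow> (f has_real_derivative f' t) (at t within {0..})"
    and le: "\<And>t. 0 \<le> t \<Longrightarrow> t \<le> T \<Longrightarrow> f' t \<le> - k * f t"
    and t: "0 \<le> t" "t \<le> T"
  shows "f t \<le> f 0 * exp (- k * t)"
proof -
  define g where "g x = f x * exp (k * x)" for x
  have dg: "(g has_real_derivative (f' x + k * f x) * exp (k * x)) (at x within {0..})" if "0 \<le> x" for x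
    unfolding g_def
    by (rule derivative_eq_intros der[OF that] refl | simp add: algebra_simps)+
  have "g t \<le> g 0"
  proof (rule DERIV_nonpos_imp_decreasing_open[OF t(1)])
    fix x assume x: "0 < x" "x < t"
    have "interior {0::real..} = {0<..}" by simp
    hence "at x within {0..} = at x" using x by (intro at_within_interior) auto
    with dg[of x] x have "DERIV g x :> (f' x + k * f x) * exp (k * x)" by auto
    moreover have "(f' x + k * f x) * exp (k * x) \<le> 0"
      using le[of x] x t by (intro mult_nonpos_nonneg) auto
    ultimately show "\<exists>y. DERIV g x :> y \<and> y \<le> 0" by blast
  next
    show "continuous_on {0..t} g"
      unfolding continuous_on_eq_continuous_within
    proof
      fix x assume "x \<in> {0..t}"
      hence "continuous (at x within {0..}) g" using dg[of x] DERIV_continuous by auto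
      thus "continuous (at x within {0..t}) g" by (rule continuous_within_subset) auto
    qed
  qed
  hence "f t * exp (k * t) \<le> f 0" unfolding g_def by simp
  hence "f t * exp (k * t) * exp (- k * t) \<le> f 0 * exp (- k * t)"
    by (intro mult_right_mono) auto
  thus ?thesis by (simp add: mult.assoc flip: exp_add)
qed

definition neg2 :: "real \<Rightarrow> real" where "neg2 x = (max 0 (- x))^2"

lemma neg2_deriv: "(neg2 has_real_derivative (- 2 * max 0 (- x))) (at x)"
proof (cases "x = 0")
  case True
  have "((\<lambda>h. (neg2 (0 + h) - neg2 0) / h) \<longlongrightarrow> 0) (at 0)"
  proof (rule tendsto_sandwich[where f = "\<lambda>h. - \<bar>h\<bar>" and h = "\<lambda>h. \<bar>h\<bar>"])
    show "\<forall>\<^sub>F h in at 0. - \<bar>h\<bar> \<le> (neg2 (0 + h) - neg2 0) / h"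
      by (intro always_eventually allI) (auto simp: neg2_def max_def power2_eq_square)
    show "\<forall>\<^sub>F h in at 0. (neg2 (0 + h) - neg2 0) / h \<le> \<bar>h\<bar>"
      by (intro always_eventually allI) (auto simp: neg2_def max_def power2_eq_square)
    show "((\<lambda>h::real. - \<bar>h\<bar>) \<longlongrightarrow> 0) (at 0)"
      using tendsto_minus[OF tendsto_rabs[OF tendsto_ident_at[of "0::real" UNIV]]] by simp
    show "((\<lambda>h::real. \<bar>h\<bar>) \<longlongrightarrow> 0) (at 0)"
      using tendsto_rabs[OF tendsto_ident_at[of "0::real" UNIV]] by simp
  qed
  thus ?thesis using True by (simp add: DERIV_def)
next
  case False
  show ?thesis
  proof (cases "x < 0")
    case True
    have "((\<lambda>y. y^2) has_real_derivative 2 * x) (at x)"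
      by (rule derivative_eq_intros refl | simp)+
    moreover have "\<forall>\<^sub>F y in nhds x. y^2 = neg2 y"
      using eventually_nhds_in_open[of "{..<0}" x] True
      by (auto elim!: eventually_mono simp: neg2_def)
    ultimately show ?thesis using True
      by (simp add: DERIV_cong_ev)
  next
    case False2: False
    with False have "x > 0" by auto
    have "((\<lambda>y. 0) has_real_derivative 0) (at x)" by simp
    moreover have "\<forall>\<^sub>F y in nhds x. 0 = neg2 y"
      using eventually_nhds_in_open[of "{0<..}" x] \<open>x > 0\<close>
      by (auto elim!: eventually_mono simp: neg2_def)
    ultimately show ?thesis using \<open>x > 0\<close>
      by (simp add: DERIV_cong_ev)
  qed
qed



lemma cont_from_deriv:
  assumes "\<And>t. 0 \<le> t \<Longrightarrow> (f has_real_derivative f' t) (at t within {0..})"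
  shows "continuous_on {0..} f"
  unfolding continuous_on_eq_continuous_within
  using assms by (auto intro: DERIV_continuous)

lemma neg2_nonneg: "neg2 x \<ge> 0" by (simp add: neg2_def)
lemma neg2_zero_iff: "neg2 x = 0 \<longleftrightarrow> x \<ge> 0" by (auto simp: neg2_def max_def)

lemma nonneg_sys:
  fixes z z' :: "'a \<Rightarrow> real \<Rightarrow> real" and J :: "'a set"
  assumes fin: "finite J"
    and der: "\<And>j t. j \<in> J \<Longrightarrow> 0 \<le> t \<Longrightarrow> (z j has_real_derivative z' j t) (at t within {0..})"
    and init: "\<And>j. j \<in> J \<Longrightarrow> z j 0 \<ge> 0"
    and bnd: "\<And>T. \<exists>C\<ge>0. \<forall>t\<in>{0..T}. \<forall>j\<in>J. z j t < 0 \<longrightarrow> z' j t \<ge> C * (\<Sum>i\<in>J. min 0 (z i t))"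
    and j: "j \<in> J" and t: "0 \<le> t"
  shows "z j t \<ge> 0"
proof -
  obtain C where C: "C \<ge> 0" "\<And>s j. s \<in> {0..t} \<Longrightarrow> j \<in> J \<Longrightarrow> z j s < 0 \<Longrightarrow> z' j s \<ge> C * (\<Sum>i\<in>J. min 0 (z i s))"
    using bnd[of t] by blast
  define u where "u s = (\<Sum>j\<in>J. neg2 (z j s))" for s
  define u' where "u' s = (\<Sum>j\<in>J. - 2 * max 0 (- z j s) * z' j s)" for s
  have du: "(u has_real_derivative u' s) (at s within {0..})" if "0 \<le> s" for s
    unfolding u_def u'_def
    by (rule DERIV_sum, rule DERIV_chain2[OF neg2_deriv der], auto simp: that)
  have ule: "u' s \<le> - (- (2 * C * real (card J))) * u s" if s: "0 \<le> s" "s \<le> t" for s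
  proof -
    define m where "m i = max 0 (- z i s)" for i
    have mn: "m i \<ge> 0" for i unfolding m_def by simp
    have min_eq: "min 0 (z i s) = - m i" for i unfolding m_def by auto
    have trm: "- 2 * m j * z' j s \<le> 2 * C * (m j * (\<Sum>i\<in>J. m i))" if j: "j \<in> J" for j
    proof (cases "z j s < 0")
      case True
      have "z' j s \<ge> C * (\<Sum>i\<in>J. min 0 (z i s))" using C(2)[OF _ j True] s by auto
      hence "z' j s \<ge> - C * (\<Sum>i\<in>J. m i)" by (simp add: min_eq sum_negf)
      hence "- 2 * m j * z' j s \<le> - 2 * m j * (- C * (\<Sum>i\<in>J. m i))"
        using mn[of j] by (intro mult_left_mono_neg) auto
      thus ?thesis by (simp add: algebra_simps)
    next
      case False
      hence "m j = 0" unfolding m_def by auto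
      thus ?thesis by simp
    qed
    have "u' s = (\<Sum>j\<in>J. - 2 * m j * z' j s)" unfolding u'_def m_def ..
    also have "\<dots> \<le> (\<Sum>j\<in>J. 2 * C * (m j * (\<Sum>i\<in>J. m i)))" by (rule sum_mono) (rule trm)
    also have "\<dots> = 2 * C * (\<Sum>i\<in>J. m i)^2"
      by (simp add: sum_distrib_left sum_distrib_right power2_eq_square algebra_simps)
    also have "\<dots> \<le> 2 * C * ((\<Sum>i\<in>J. (m i)^2) * real (card J))"
      using C(1) by (intro mult_left_mono sum_squared_le_sum_of_squares) auto
    also have "(\<Sum>i\<in>J. (m i)^2) = u s" unfolding u_def m_def neg2_def ..
    finally show ?thesis by (simp add: algebra_simps)
  qed
  have "u t \<le> u 0 * exp (- (- (2 * C * real (card J))) * t)"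
    by (rule decay[OF du ule _ order_refl]) (use t in auto)
  moreover have "u 0 = 0" unfolding u_def using init by (simp add: neg2_zero_iff)
  ultimately have "u t \<le> 0" by simp
  moreover have "neg2 (z j t) \<le> u t" unfolding u_def
    using fin j by (intro member_le_sum) (auto intro: neg2_nonneg)
  ultimately have "neg2 (z j t) = 0" using neg2_nonneg[of "z j t"] by linarith
  thus ?thesis by (simp add: neg2_zero_iff)
qed

lemma fin_lower:
  fixes f :: "'a \<Rightarrow> real"
  assumes "finite A" "\<And>a. a \<in> A \<Longrightarrow> f a > 0"
  shows "\<exists>k>0. \<forall>a\<in>A. k \<le> f a"
proof (intro exI conjI ballI)
  show "0 < Min (insert 1 (f ` A))" using assms by (subst Min_gr_iff) auto
  fix a assume "a \<in> A" thus "Min (insert 1 (f ` A)) \<le> f a" using assms by (intro Min_le) auto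
qed

lemma fin_upper:
  fixes f :: "'a \<Rightarrow> real"
  assumes "finite A"
  shows "\<exists>M>0. \<forall>a\<in>A. f a \<le> M"
proof (intro exI conjI ballI)
  show "0 < Max (insert 1 (f ` A))" using assms by (subst Max_gr_iff) auto
  fix a assume "a \<in> A" thus "f a \<le> Max (insert 1 (f ` A))" using assms by (intro Max_ge) auto
qed

lemma fin_bound_choice:
  fixes g :: "'a \<Rightarrow> 'b \<Rightarrow> real"
  assumes "finite A" "\<And>a. a \<in> A \<Longrightarrow> \<exists>C. \<forall>t\<in>X. g a t \<le> C"
  shows "\<exists>C\<ge>0. \<forall>a\<in>A. \<forall>t\<in>X. g a t \<le> C"
proof -
  from assms(2) obtain Cf where Cf: "\<And>a. a \<in> A \<Longrightarrow> \<forall>t\<in>X. g a t \<le> Cf a" by metis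
  from fin_upper[OF assms(1), of Cf] obtain M where "M > 0" "\<forall>a\<in>A. Cf a \<le> M" by auto
  with Cf show ?thesis by (intro exI[of _ M]) force
qed

lemma cont_bound:
  fixes f :: "real \<Rightarrow> real"
  assumes "continuous_on {0..} f"
  shows "\<exists>C. \<forall>t\<in>{0..T}. \<bar>f t\<bar> \<le> C"
proof -
  have "continuous_on {0..T} f" using assms by (rule continuous_on_subset) auto
  hence "compact (f ` {0..T})" by (intro compact_continuous_image) auto
  hence "bounded (f ` {0..T})" by (rule compact_imp_bounded)
  then obtain C where "\<forall>x\<in>f ` {0..T}. norm x \<le> C" unfolding bounded_iff by blast
  thus ?thesis by auto
qed



fun Mp :: "nat \<Rightarrow> (nat \<Rightarrow> nat \<Rightarrow> real) \<Rightarrow> nat \<Rightarrow> nat \<Rightarrow> nat \<Rightarrow> real" where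
  "Mp P B 0 i j = (if i = j then 1 else 0)"
| "Mp P B (Suc k) i j = (\<Sum>r<P. Mp P B k i r * B r j)"

lemma Mp_link:
  assumes "i < P" "j < P"
  shows "(mat P P (\<lambda>(p,q). complex_of_real (B p q)) ^\<^sub>m k) $$ (i,j) = complex_of_real (Mp P B k i j)"
  using assms
proof (induction k arbitrary: j)
  case 0
  then show ?case by simp
next
  case (Suc k)
  let ?A = "mat P P (\<lambda>(p,q). complex_of_real (B p q))"
  have "(?A ^\<^sub>m Suc k) $$ (i,j) = scalar_prod (row (?A ^\<^sub>m k) i) (col ?A j)"
    using Suc.prems by simp
  also have "\<dots> = (\<Sum>r = 0..<P. (?A ^\<^sub>m k) $$ (i,r) * ?A $$ (r,j))"
    unfolding scalar_prod_def using Suc.prems by (intro sum.cong) auto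
  also have "\<dots> = (\<Sum>r = 0..<P. complex_of_real (Mp P B k i r * B r j))"
    using Suc by (intro sum.cong) auto
  also have "\<dots> = complex_of_real (Mp P B (Suc k) i j)"
    by (simp add: atLeast0LessThan)
  finally show ?case .
qed

lemma Mp_scale: "Mp P (\<lambda>i j. c * B i j) k i j = c ^ k * Mp P B k i j"
  by (induction k arbitrary: j) (auto simp: sum_distrib_left algebra_simps)

lemma Mp_nonneg: "(\<And>i j. i < P \<Longrightarrow> j < P \<Longrightarrow> B i j \<ge> 0) \<Longrightarrow> j < P \<Longrightarrow> Mp P B k i j \<ge> 0"
  by (induction k arbitrary: j) (auto intro!: sum_nonneg mult_nonneg_nonneg)

lemma sr_scale:
  fixes B :: "nat \<Rightarrow> nat \<Rightarrow> real"
  assumes P: "P > 0" and r: "r > 0"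
    and sr: "spectral_radius (mat P P (\<lambda>(p,q). complex_of_real (B p q))) < r"
  shows "spectral_radius (mat P P (\<lambda>(p,q). complex_of_real (B p q / r))) < 1"
proof -
  let ?A = "mat P P (\<lambda>(p,q). complex_of_real (B p q))"
  let ?A2 = "mat P P (\<lambda>(p,q). complex_of_real (B p q / r))"
  have A: "?A \<in> carrier_mat P P" and A2: "?A2 \<in> carrier_mat P P" by auto
  from spectral_radius_mem_max(1)[OF A2 P] obtain ev where
    ev: "ev \<in> spectrum ?A2" and eq: "spectral_radius ?A2 = norm ev" by auto
  from ev obtain v where v: "eigenvector ?A2 v ev"
    unfolding spectrum_def eigenvalue_def by auto
  have vc: "v \<in> carrier_vec P" and vnz: "v \<noteq> 0\<^sub>v P" and Av: "?A2 *\<^sub>v v = ev \<cdot>\<^sub>v v"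
    using v unfolding eigenvector_def by auto
  have "?A *\<^sub>v v = (complex_of_real r * ev) \<cdot>\<^sub>v v"
  proof (rule eq_vecI)
    fix i assume i: "i < dim_vec ((complex_of_real r * ev) \<cdot>\<^sub>v v)"
    hence iP: "i < P" using vc by auto
    have "vec_index (?A *\<^sub>v v) i = scalar_prod (row ?A i) v"
      using iP by simp
    also have "\<dots> = (\<Sum>j = 0..<P. complex_of_real r * (?A2 $$ (i,j) * vec_index v j))"
      using iP vc r unfolding scalar_prod_def
      by (intro sum.cong) auto
    also have "\<dots> = complex_of_real r * scalar_prod (row ?A2 i) v"
      using iP vc by (simp add: scalar_prod_def sum_distrib_left)
    also have "\<dots> = complex_of_real r * vec_index (?A2 *\<^sub>v v) i"
      using iP by simp
    also have "\<dots> = vec_index ((complex_of_real r * ev) \<cdot>\<^sub>v v) i"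
      using Av iP vc by simp
    finally show "vec_index (?A *\<^sub>v v) i = vec_index ((complex_of_real r * ev) \<cdot>\<^sub>v v) i" .
  qed (use vc in auto)
  hence "eigenvector ?A v (complex_of_real r * ev)"
    using vc vnz unfolding eigenvector_def by auto
  hence "complex_of_real r * ev \<in> spectrum ?A"
    unfolding spectrum_def eigenvalue_def by auto
  from spectral_radius_mem_max(2)[OF A P imageI[OF this, of norm]] sr
  have "norm (complex_of_real r * ev) < r" by auto
  hence "r * norm ev < r * 1" using r by (simp add: norm_mult)
  hence "norm ev < 1" using r by (simp only: mult_less_cancel_left_pos)
  thus ?thesis using eq by simp
qed

lemma perron_weight:
  fixes B :: "nat \<Rightarrow> nat \<Rightarrow> real"
  assumes P: "P > 0" and nn: "\<And>i j. i < P \<Longrightarrow> j < P \<Longrightarrow> B i j \<ge> 0"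
    and sr: "spectral_radius (mat P P (\<lambda>(p,q). complex_of_real (B p q))) < 1"
  shows "\<exists>w. (\<forall>q<P. w q \<ge> 1) \<and> (\<forall>q<P. (\<Sum>p<P. w p * B p q) < w q)"
proof -
  let ?A = "mat P P (\<lambda>(p,q). complex_of_real (B p q))"
  define \<rho> where "\<rho> = spectral_radius ?A"
  have "\<rho> \<ge> 0"
  proof -
    have A: "?A \<in> carrier_mat P P" by auto
    from spectral_radius_mem_max(1)[OF A P] show ?thesis unfolding \<rho>_def by auto
  qed
  define r where "r = (\<rho> + 1) / 2"
  have r0: "r > 0" and r1: "r < 1" and rr: "\<rho> < r" using \<open>\<rho> \<ge> 0\<close> sr unfolding r_def \<rho>_def by auto
  define B2 where "B2 = (\<lambda>p q. B p q / r)"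
  have sr2: "spectral_radius (mat P P (\<lambda>(p,q). complex_of_real (B2 p q))) < 1"
    unfolding B2_def by (rule sr_scale[OF P r0]) (use rr in \<open>simp add: \<rho>_def\<close>)
  have car: "mat P P (\<lambda>(p,q). complex_of_real (B2 p q)) \<in> carrier_mat P P" by auto
  obtain c where c: "\<And>k. norm_bound (mat P P (\<lambda>(p,q). complex_of_real (B2 p q)) ^\<^sub>m k) c"
    using spectral_radius_jnf_norm_bound_less_1_upper_triangular[OF car sr2] by auto
  have Bsc: "B = (\<lambda>i j. r * B2 i j)" using r0 unfolding B2_def by auto
  have bound: "Mp P B k i j \<le> r ^ k * c" if "i < P" "j < P" for k i j
  proof -
    have "norm ((mat P P (\<lambda>(p,q). complex_of_real (B2 p q)) ^\<^sub>m k) $$ (i,j)) \<le> c"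
      using c[of k] that unfolding norm_bound_def by auto
    hence "\<bar>Mp P B2 k i j\<bar> \<le> c" using Mp_link[OF that, of B2 k] by simp
    hence "Mp P B2 k i j \<le> c" by simp
    hence "r ^ k * Mp P B2 k i j \<le> r ^ k * c" using r0 by (intro mult_left_mono) auto
    thus ?thesis unfolding Bsc Mp_scale by simp
  qed
  obtain K0 where K0: "r ^ K0 < 1 / (real P * \<bar>c\<bar> + 1)"
  proof -
    have "0 < real P * \<bar>c\<bar> + 1" by (intro add_nonneg_pos) auto
    hence "0 < 1 / (real P * \<bar>c\<bar> + 1)" by simp
    from real_arch_pow_inv[OF this r1] show ?thesis using that by blast
  qed
  define K where "K = Suc K0"
  have "r ^ K \<le> r ^ K0" unfolding K_def using r0 r1 by (simp add: power_decreasing)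
  hence "r ^ K < 1 / (real P * \<bar>c\<bar> + 1)" using K0 by linarith
  moreover have "0 < real P * \<bar>c\<bar> + 1" by (intro add_nonneg_pos) auto
  ultimately have rK: "r ^ K * (real P * \<bar>c\<bar> + 1) < 1"
    by (simp add: pos_less_divide_eq)
  define f where "f k q = (\<Sum>p<P. Mp P B k p q)" for k q
  define w where "w q = (\<Sum>k<K. f k q)" for q
  have f0: "f 0 q = 1" if "q < P" for q
    unfolding f_def using that by (simp add: sum.delta')
  have fnn: "f k q \<ge> 0" if "q < P" for k q
    unfolding f_def using Mp_nonneg[OF nn that] by (intro sum_nonneg) auto
  have fK: "f K q < 1" if "q < P" for q
  proof -
    have "f K q \<le> (\<Sum>p<P. r ^ K * c)" unfolding f_def using bound that by (intro sum_mono) auto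
    also have "\<dots> = r ^ K * (real P * c)" by simp
    also have "\<dots> \<le> r ^ K * (real P * \<bar>c\<bar>)"
      using r0 by (intro mult_left_mono) auto
    also have "\<dots> \<le> r ^ K * (real P * \<bar>c\<bar> + 1)" using r0 by simp
    finally show ?thesis using rK by simp
  qed
  show ?thesis
  proof (intro exI conjI allI impI)
    fix q assume q: "q < P"
    have "w q = f 0 q + (\<Sum>k<K0. f (Suc k) q)" unfolding w_def K_def sum.lessThan_Suc_shift ..
    also have "\<dots> \<ge> 1" using f0[OF q] fnn[OF q] by (simp add: sum_nonneg)
    finally show "w q \<ge> 1" .
  next
    fix q assume q: "q < P"
    have "(\<Sum>p<P. w p * B p q) = (\<Sum>p<P. \<Sum>k<K. \<Sum>p'<P. Mp P B k p' p * B p q)"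
      unfolding w_def f_def sum_distrib_right ..
    also have "\<dots> = (\<Sum>k<K. \<Sum>p<P. \<Sum>p'<P. Mp P B k p' p * B p q)" by (rule sum.swap)
    also have "\<dots> = (\<Sum>k<K. \<Sum>p'<P. \<Sum>p<P. Mp P B k p' p * B p q)"
      by (intro sum.cong refl sum.swap)
    also have "\<dots> = (\<Sum>k<K. f (Suc k) q)" unfolding f_def by simp
    also have "\<dots> = w q - f 0 q + f K q"
    proof -
      have "(\<Sum>k<Suc K. f k q) = f 0 q + (\<Sum>k<K. f (Suc k) q)" by (rule sum.lessThan_Suc_shift)
      moreover have "(\<Sum>k<Suc K. f k q) = w q + f K q" unfolding w_def by simp
      ultimately show ?thesis by simp
    qed
    also have "\<dots> < w q" using f0[OF q] fK[OF q] by simp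
    finally show "(\<Sum>p<P. w p * B p q) < w q" .
  qed
qed



lemma A3_alg: fixes I s a g e W L :: real shows "e \<noteq> 0 \<Longrightarrow> I*(s*a*g/e) + (-W*a*L + (a*(W+s)/(2*e))*(e*L - g*I)) = -((a*(W-s)/2)*L + (a*g/e*(W-s)/2)*I)"
  by (simp add: field_simps)

locale sys =
  fixes P V :: nat and b d :: "nat \<Rightarrow> real" and eps gam :: "nat \<Rightarrow> nat \<Rightarrow> real"
    and beta :: "nat \<Rightarrow> nat \<Rightarrow> nat \<Rightarrow> real"
  assumes P1: "P \<ge> 1" and V1: "V \<ge> 1"
    and bd: "\<forall>p<P. b p > 0 \<and> d p > 0"
    and eg: "\<forall>p<P. \<forall>v<V. eps p v > 0 \<and> gam p v > 0"
    and be: "\<forall>p<P. \<forall>q<P. \<forall>v<V. beta p q v \<ge> 0"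
    and R0: "R0 P V b d eps gam beta < 1"
begin

lemma b_pos: "p < P \<Longrightarrow> b p > 0" using bd by auto
lemma d_pos: "p < P \<Longrightarrow> d p > 0" using bd by auto
lemma eps_pos: "p < P \<Longrightarrow> v < V \<Longrightarrow> eps p v > 0" using eg by auto
lemma gam_pos: "p < P \<Longrightarrow> v < V \<Longrightarrow> gam p v > 0" using eg by auto
lemma beta_nn: "p < P \<Longrightarrow> q < P \<Longrightarrow> v < V \<Longrightarrow> beta p q v \<ge> 0" using be by auto
lemma S0_pos: "p < P \<Longrightarrow> S0 b d p > 0" unfolding S0_def using b_pos d_pos by auto

definition Bre where "Bre v p q = beta p q v * eps q v * S0 b d p / ((eps q v + d q) * (gam q v + d q))"

lemma Bre_nn: "v < V \<Longrightarrow> p < P \<Longrightarrow> q < P \<Longrightarrow> Bre v p q \<ge> 0"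
  unfolding Bre_def using beta_nn[of p q v] eps_pos[of q v] S0_pos[of p] d_pos[of q] gam_pos[of q v]
  by (intro divide_nonneg_pos mult_nonneg_nonneg mult_pos_pos add_pos_pos) auto

lemma beta_S0: "v < V \<Longrightarrow> q < P \<Longrightarrow>
  beta p q v * S0 b d p = Bre v p q * (eps q v + d q) * (gam q v + d q) / eps q v"
proof -
  assume a: "v < V" "q < P"
  have "eps q v + d q > 0" "gam q v + d q > 0" "eps q v > 0"
    using eps_pos[OF a(2,1)] d_pos[OF a(2)] gam_pos[OF a(2,1)] by auto
  hence h: "Bre v p q * ((eps q v + d q) * (gam q v + d q)) = beta p q v * eps q v * S0 b d p"
    unfolding Bre_def by simp
  hence "Bre v p q * (eps q v + d q) * (gam q v + d q) = beta p q v * eps q v * S0 b d p"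
    by (simp add: mult.assoc)
  thus ?thesis using \<open>eps q v > 0\<close> by simp
qed

lemma R0v_lt: "v < V \<Longrightarrow> R0v P b d eps gam beta v < 1"
proof -
  assume v: "v < V"
  have "R0v P b d eps gam beta v \<le> R0 P V b d eps gam beta"
    unfolding R0_def using v by (intro Max_ge) auto
  with R0 show ?thesis by simp
qed

lemma perron_all: "\<exists>W. \<forall>v<V. (\<forall>q<P. W v q \<ge> 1) \<and> (\<forall>q<P. (\<Sum>p<P. W v p * Bre v p q) < W v q)"
proof -
  have "\<forall>v<V. \<exists>w. (\<forall>q<P. w q \<ge> 1) \<and> (\<forall>q<P. (\<Sum>p<P. w p * Bre v p q) < w q)"
  proof (intro allI impI)
    fix v assume v: "v < V"
    have "spectral_radius (mat P P (\<lambda>(p,q). complex_of_real (Bre v p q))) < 1"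
      using R0v_lt[OF v] unfolding R0v_def Bmat_def Bre_def .
    thus "\<exists>w. (\<forall>q<P. w q \<ge> 1) \<and> (\<forall>q<P. (\<Sum>p<P. w p * Bre v p q) < w q)"
      using P1 Bre_nn[OF v] by (intro perron_weight) auto
  qed
  thus ?thesis by metis
qed

lemma weights:
  "\<exists>x y \<kappa>. \<kappa> > 0 \<and> (\<forall>p<P. \<forall>v<V. x p v > 0 \<and> y p v > 0) \<and>
    (\<forall>v<V. \<forall>Sv Lv Iv. (\<forall>p<P. 0 \<le> Sv p \<and> Sv p \<le> S0 b d p \<and> 0 \<le> Lv p \<and> 0 \<le> Iv p) \<longrightarrow>
      (\<Sum>p<P. x p v * ((\<Sum>q<P. beta p q v * Iv q) * Sv p - (eps p v + d p) * Lv p)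
             + y p v * (eps p v * Lv p - (gam p v + d p) * Iv p))
      \<le> - \<kappa> * (\<Sum>p<P. x p v * Lv p + y p v * Iv p))"
proof -
  obtain W where W: "\<And>v q. v < V \<Longrightarrow> q < P \<Longrightarrow> W v q \<ge> 1"
    "\<And>v q. v < V \<Longrightarrow> q < P \<Longrightarrow> (\<Sum>p<P. W v p * Bre v p q) < W v q"
    using perron_all by blast
  define \<sigma> where "\<sigma> v q = (\<Sum>p<P. W v p * Bre v p q)" for v q
  define x where "x p v = W v p" for p v
  define y where "y p v = (eps p v + d p) * (W v p + \<sigma> v p) / (2 * eps p v)" for p v
  define cL where "cL p v = (eps p v + d p) * (W v p - \<sigma> v p) / 2" for p v
  define cI where "cI p v = (eps p v + d p) * (gam p v + d p) / eps p v * (W v p - \<sigma> v p) / 2" for p v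
  have \<sigma>nn: "\<sigma> v q \<ge> 0" if "v < V" "q < P" for v q
    unfolding \<sigma>_def using W(1)[OF that(1)] Bre_nn[OF that(1)] that
    by (intro sum_nonneg mult_nonneg_nonneg) force+
  have \<sigma>lt: "\<sigma> v q < W v q" if "v < V" "q < P" for v q using W(2)[OF that] unfolding \<sigma>_def .
  have xpos: "x p v > 0" if "p < P" "v < V" for p v using W(1)[OF that(2,1)] unfolding x_def by simp
  have ypos: "y p v > 0" if "p < P" "v < V" for p v
    unfolding y_def using eps_pos[OF that] d_pos[OF that(1)] W(1)[OF that(2,1)] \<sigma>nn[OF that(2,1)]
    by (intro divide_pos_pos mult_pos_pos add_pos_nonneg) auto
  have cLpos: "cL p v > 0" if "p < P" "v < V" for p v
    unfolding cL_def using eps_pos[OF that] d_pos[OF that(1)] \<sigma>lt[OF that(2,1)]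
    by (intro divide_pos_pos mult_pos_pos add_pos_pos) auto
  have cIpos: "cI p v > 0" if "p < P" "v < V" for p v
    unfolding cI_def using eps_pos[OF that] d_pos[OF that(1)] gam_pos[OF that] \<sigma>lt[OF that(2,1)]
    by (intro divide_pos_pos mult_pos_pos add_pos_pos) auto
  obtain \<kappa> where \<kappa>: "\<kappa> > 0" "\<forall>pv\<in>{..<P}\<times>{..<V}. \<kappa> \<le> min (cL (fst pv) (snd pv) / x (fst pv) (snd pv)) (cI (fst pv) (snd pv) / y (fst pv) (snd pv))"
    using fin_lower[of "{..<P}\<times>{..<V}" "\<lambda>pv. min (cL (fst pv) (snd pv) / x (fst pv) (snd pv)) (cI (fst pv) (snd pv) / y (fst pv) (snd pv))"]
      cLpos cIpos xpos ypos by auto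
  have \<kappa>L: "\<kappa> * x p v \<le> cL p v" if "p < P" "v < V" for p v
  proof -
    have "\<kappa> \<le> cL p v / x p v" using \<kappa>(2) that by auto
    thus ?thesis using xpos[OF that] by (simp add: pos_le_divide_eq mult.commute)
  qed
  have \<kappa>I: "\<kappa> * y p v \<le> cI p v" if "p < P" "v < V" for p v
  proof -
    have "\<kappa> \<le> cI p v / y p v" using \<kappa>(2) that by auto
    thus ?thesis using ypos[OF that] by (simp add: pos_le_divide_eq mult.commute)
  qed
  show ?thesis
  proof (rule exI[of _ x], rule exI[of _ y], rule exI[of _ \<kappa>], intro conjI allI impI)
    show "\<kappa> > 0" by fact
  next
    fix p v assume "p < P" "v < V" thus "0 < x p v" using xpos by auto
  next
    fix p v assume "p < P" "v < V" thus "0 < y p v" using ypos by auto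
  next
    fix v and Sv Lv Iv :: "nat \<Rightarrow> real"
    assume v: "v < V" and st: "\<forall>p<P. 0 \<le> Sv p \<and> Sv p \<le> S0 b d p \<and> 0 \<le> Lv p \<and> 0 \<le> Iv p"
    have A1: "(\<Sum>p<P. x p v * ((\<Sum>q<P. beta p q v * Iv q) * Sv p))
        \<le> (\<Sum>p<P. x p v * ((\<Sum>q<P. beta p q v * Iv q) * S0 b d p))"
    proof (rule sum_mono)
      fix p assume p: "p \<in> {..<P}"
      have "0 \<le> (\<Sum>q<P. beta p q v * Iv q)" using st beta_nn p v by (intro sum_nonneg mult_nonneg_nonneg) auto
      hence "(\<Sum>q<P. beta p q v * Iv q) * Sv p \<le> (\<Sum>q<P. beta p q v * Iv q) * S0 b d p"
        using st p by (intro mult_left_mono) auto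
      thus "x p v * ((\<Sum>q<P. beta p q v * Iv q) * Sv p) \<le> x p v * ((\<Sum>q<P. beta p q v * Iv q) * S0 b d p)"
        using xpos[of p v] p v by (auto intro!: mult_left_mono[where c="x p v"])
    qed
    have A2: "(\<Sum>p<P. x p v * ((\<Sum>q<P. beta p q v * Iv q) * S0 b d p))
        = (\<Sum>q<P. Iv q * (\<sigma> v q * (eps q v + d q) * (gam q v + d q) / eps q v))"
    proof -
      have "(\<Sum>p<P. x p v * ((\<Sum>q<P. beta p q v * Iv q) * S0 b d p))
          = (\<Sum>p<P. \<Sum>q<P. Iv q * (W v p * (beta p q v * S0 b d p)))"
        unfolding x_def by (simp add: sum_distrib_left sum_distrib_right algebra_simps)
      also have "\<dots> = (\<Sum>q<P. \<Sum>p<P. Iv q * (W v p * (beta p q v * S0 b d p)))" by (rule sum.swap)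
      also have "\<dots> = (\<Sum>q<P. \<Sum>p<P. Iv q * (W v p * (Bre v p q * (eps q v + d q) * (gam q v + d q) / eps q v)))"
        by (intro sum.cong refl) (simp add: beta_S0[OF v])
      also have "\<dots> = (\<Sum>q<P. Iv q * (\<Sum>p<P. W v p * Bre v p q) * (eps q v + d q) * (gam q v + d q) / eps q v)"
        by (intro sum.cong refl) (simp add: sum_distrib_left sum_distrib_right sum_divide_distrib mult_ac)
      finally show ?thesis unfolding \<sigma>_def by (simp add: algebra_simps)
    qed
    have A3: "Iv q * (\<sigma> v q * (eps q v + d q) * (gam q v + d q) / eps q v)
        + (- x q v * (eps q v + d q) * Lv q + y q v * (eps q v * Lv q - (gam q v + d q) * Iv q))
        = - (cL q v * Lv q + cI q v * Iv q)" if q: "q < P" for q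
      unfolding x_def y_def cL_def cI_def using eps_pos[OF q v]
      by (intro A3_alg) auto

    have A4: "- (cL q v * Lv q + cI q v * Iv q) \<le> - \<kappa> * (x q v * Lv q + y q v * Iv q)" if q: "q < P" for q
    proof -
      have "\<kappa> * x q v * Lv q \<le> cL q v * Lv q" using \<kappa>L[OF q v] st q by (intro mult_right_mono) auto
      moreover have "\<kappa> * y q v * Iv q \<le> cI q v * Iv q" using \<kappa>I[OF q v] st q by (intro mult_right_mono) auto
      ultimately show ?thesis by (simp add: algebra_simps)
    qed
    have "(\<Sum>p<P. x p v * ((\<Sum>q<P. beta p q v * Iv q) * Sv p - (eps p v + d p) * Lv p)
             + y p v * (eps p v * Lv p - (gam p v + d p) * Iv p))
        = (\<Sum>p<P. x p v * ((\<Sum>q<P. beta p q v * Iv q) * Sv p))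
          + (\<Sum>p<P. - x p v * (eps p v + d p) * Lv p + y p v * (eps p v * Lv p - (gam p v + d p) * Iv p))"
      by (simp add: sum.distrib[symmetric] algebra_simps)
    also have "\<dots> \<le> (\<Sum>q<P. Iv q * (\<sigma> v q * (eps q v + d q) * (gam q v + d q) / eps q v))
          + (\<Sum>p<P. - x p v * (eps p v + d p) * Lv p + y p v * (eps p v * Lv p - (gam p v + d p) * Iv p))"
      using A1 A2 by simp
    also have "\<dots> = (\<Sum>q<P. - (cL q v * Lv q + cI q v * Iv q))"
      unfolding sum.distrib[symmetric] by (rule sum.cong[OF refl]) (use A3 in auto)
    also have "\<dots> \<le> (\<Sum>q<P. - \<kappa> * (x q v * Lv q + y q v * Iv q))"
      by (rule sum_mono) (use A4 in auto)
    also have "\<dots> = - \<kappa> * (\<Sum>p<P. x p v * Lv p + y p v * Iv p)"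
      by (simp only: sum_distrib_left mult_minus_left sum_negf)
    finally show "(\<Sum>p<P. x p v * ((\<Sum>q<P. beta p q v * Iv q) * Sv p - (eps p v + d p) * Lv p)
             + y p v * (eps p v * Lv p - (gam p v + d p) * Iv p))
      \<le> - \<kappa> * (\<Sum>p<P. x p v * Lv p + y p v * Iv p)" .
  qed
qed

end


lemma sum_le_member:
  fixes f :: "'a \<Rightarrow> real"
  assumes "finite J" "p \<in> J" "\<And>i. i \<in> J \<Longrightarrow> f i \<le> 0"
  shows "sum f J \<le> f p"
proof -
  have "sum f J = f p + sum f (J - {p})" using assms by (simp add: sum.remove)
  moreover have "sum f (J - {p}) \<le> 0" using assms by (intro sum_nonpos) auto
  ultimately show ?thesis by simp
qed

lemma sum_le_subset_nonpos:
  fixes f :: "'a \<Rightarrow> real"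
  assumes "finite J" "A \<subseteq> J" "\<And>i. i \<in> J \<Longrightarrow> f i \<le> 0"
  shows "sum f J \<le> sum f A"
proof -
  have "sum (\<lambda>i. - f i) A \<le> sum (\<lambda>i. - f i) J"
    using assms by (intro sum_mono2) auto
  thus ?thesis by (simp add: sum_negf)
qed

locale sol = sys +
  fixes S :: "real \<Rightarrow> nat \<Rightarrow> real" and L I :: "real \<Rightarrow> nat \<Rightarrow> nat \<Rightarrow> real" and R :: "real \<Rightarrow> nat \<Rightarrow> real"
  assumes sol: "is_solution P V b d eps gam beta S L I R"
    and om: "in_Omega P V b d (S 0) (L 0) (I 0) (R 0)"
begin

definition "dS t p = b p - ((\<Sum>q<P. \<Sum>v<V. beta p q v * I t q v) + d p) * S t p"
definition "dL t p v = (\<Sum>q<P. beta p q v * I t q v) * S t p - (eps p v + d p) * L t p v"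
definition "dI t p v = eps p v * L t p v - (gam p v + d p) * I t p v"
definition "dR t p = (\<Sum>v<V. gam p v * I t p v) - d p * R t p"

lemma derS: "p < P \<Longrightarrow> 0 \<le> t \<Longrightarrow> ((\<lambda>\<tau>. S \<tau> p) has_real_derivative dS t p) (at t within {0..})"
  using sol unfolding is_solution_def dS_def by blast
lemma derR: "p < P \<Longrightarrow> 0 \<le> t \<Longrightarrow> ((\<lambda>\<tau>. R \<tau> p) has_real_derivative dR t p) (at t within {0..})"
  using sol unfolding is_solution_def dR_def by blast
lemma derL: "p < P \<Longrightarrow> v < V \<Longrightarrow> 0 \<le> t \<Longrightarrow> ((\<lambda>\<tau>. L \<tau> p v) has_real_derivative dL t p v) (at t within {0..})"
  using sol unfolding is_solution_def dL_def by blast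
lemma derI: "p < P \<Longrightarrow> v < V \<Longrightarrow> 0 \<le> t \<Longrightarrow> ((\<lambda>\<tau>. I \<tau> p v) has_real_derivative dI t p v) (at t within {0..})"
  using sol unfolding is_solution_def dI_def by blast

lemma contS: "p < P \<Longrightarrow> continuous_on {0..} (\<lambda>t. S t p)" by (rule cont_from_deriv[OF derS])
lemma contI: "p < P \<Longrightarrow> v < V \<Longrightarrow> continuous_on {0..} (\<lambda>t. I t p v)" by (rule cont_from_deriv[OF derI])

lemma om0: "p < P \<Longrightarrow> S 0 p \<ge> 0" "p < P \<Longrightarrow> R 0 p \<ge> 0"
  "p < P \<Longrightarrow> v < V \<Longrightarrow> L 0 p v \<ge> 0" "p < P \<Longrightarrow> v < V \<Longrightarrow> I 0 p v \<ge> 0"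
  "p < P \<Longrightarrow> S 0 p + (\<Sum>v<V. L 0 p v + I 0 p v) + R 0 p \<le> b p / d p"
  using om unfolding in_Omega_def by auto

lemma Snn: assumes p: "p < P" and t: "0 \<le> t" shows "S t p \<ge> 0"
proof (rule nonneg_sys[where J = "{..<P}" and z = "\<lambda>p t. S t p" and z' = "\<lambda>p t. dS t p"])
  fix T :: real
  define k where "k p t = (\<Sum>q<P. \<Sum>v<V. beta p q v * I t q v) + d p" for p t
  have "\<exists>C. \<forall>t\<in>{0..T}. \<bar>k p t\<bar> \<le> C" if "p \<in> {..<P}" for p
  proof (rule cont_bound)
    show "continuous_on {0..} (k p)" unfolding k_def
      by (intro continuous_intros contI) auto
  qed
  from fin_bound_choice[where A="{..<P}" and g="\<lambda>p t. \<bar>k p t\<bar>" and X="{0..T}", OF _ this]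
  obtain C where C: "C \<ge> 0" "\<And>p t. p < P \<Longrightarrow> t \<in> {0..T} \<Longrightarrow> \<bar>k p t\<bar> \<le> C" by auto
  show "\<exists>C\<ge>0. \<forall>t\<in>{0..T}. \<forall>j\<in>{..<P}. S t j < 0 \<longrightarrow> dS t j \<ge> C * (\<Sum>i\<in>{..<P}. min 0 (S t i))"
  proof (intro exI[of _ C] conjI ballI impI)
    fix t j assume t: "t \<in> {0..T}" and j: "j \<in> {..<P}" and neg: "S t j < 0"
    have "C * (\<Sum>i\<in>{..<P}. min 0 (S t i)) \<le> C * min 0 (S t j)"
      using C(1) j by (intro mult_left_mono sum_le_member) auto
    also have "\<dots> = C * S t j" using neg by simp
    also have "\<dots> \<le> - k j t * S t j"
    proof -
      have "- k j t \<le> C" using C(2)[of j t] j t by auto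
      thus ?thesis using neg by (intro mult_right_mono_neg) auto
    qed
    also have "\<dots> \<le> dS t j" unfolding dS_def k_def using b_pos[of j] j by (auto simp: algebra_simps)
    finally show "dS t j \<ge> C * (\<Sum>i\<in>{..<P}. min 0 (S t i))" .
  qed (use C in auto)
qed (use derS om0 p t in auto)

lemma LInn: assumes p: "p < P" and v: "v < V" and t: "0 \<le> t"
  shows "L t p v \<ge> 0 \<and> I t p v \<ge> 0"
proof -
  define J where "J = ({..<P} \<times> {..<V}) \<times> (UNIV :: bool set)"
  define z where "z j t = (if snd j then L t (fst (fst j)) (snd (fst j)) else I t (fst (fst j)) (snd (fst j)))" for j t
  define z' where "z' j t = (if snd j then dL t (fst (fst j)) (snd (fst j)) else dI t (fst (fst j)) (snd (fst j)))" for j t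
  have finJ: "finite J" unfolding J_def by auto
  have main: "z j t \<ge> 0" if j: "j \<in> J" for j
  proof (rule nonneg_sys[OF finJ _ _ _ j t])
    fix j and t :: real assume "j \<in> J" "0 \<le> t"
    thus "(z j has_real_derivative z' j t) (at t within {0..})"
      unfolding z_def z'_def J_def using derL derI by (cases "snd j") auto
  next
    fix j assume "j \<in> J" thus "z j 0 \<ge> 0" unfolding z_def J_def using om0 by auto
  next
    fix T :: real
    have "\<exists>C. \<forall>t\<in>{0..T}. \<bar>S t p\<bar> \<le> C" if "p \<in> {..<P}" for p
      using that by (intro cont_bound contS) auto
    from fin_bound_choice[where A="{..<P}" and g="\<lambda>p t. \<bar>S t p\<bar>" and X="{0..T}", OF _ this]
    obtain CS where CS: "CS \<ge> 0" "\<And>p t. p < P \<Longrightarrow> t \<in> {0..T} \<Longrightarrow> \<bar>S t p\<bar> \<le> CS" by auto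
    obtain Bm where Bm: "Bm > 0" "\<forall>pqv\<in>{..<P}\<times>{..<P}\<times>{..<V}. beta (fst pqv) (fst (snd pqv)) (snd (snd pqv)) \<le> Bm"
      using fin_upper[of "{..<P}\<times>{..<P}\<times>{..<V}" "\<lambda>pqv. beta (fst pqv) (fst (snd pqv)) (snd (snd pqv))"] by auto
    obtain Em where Em: "Em > 0" "\<forall>pv\<in>{..<P}\<times>{..<V}. eps (fst pv) (snd pv) \<le> Em"
      using fin_upper[of "{..<P}\<times>{..<V}" "\<lambda>pv. eps (fst pv) (snd pv)"] by auto
    define C where "C = Bm * CS + Em"
    have C0: "C \<ge> 0" unfolding C_def using Bm Em CS by auto
    show "\<exists>C\<ge>0. \<forall>t\<in>{0..T}. \<forall>j\<in>J. z j t < 0 \<longrightarrow> z' j t \<ge> C * (\<Sum>i\<in>J. min 0 (z i t))"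
    proof (intro exI[of _ C] conjI ballI impI C0)
      fix t j assume t: "t \<in> {0..T}" and j: "j \<in> J" and neg: "z j t < 0"
      obtain p v k where jj: "j = ((p,v),k)" by (metis prod.collapse)
      have p: "p < P" and v: "v < V" using j jj unfolding J_def by auto
      have Snn': "S t q \<ge> 0" if "q < P" for q using Snn[OF that] t by auto
      have sumnp: "(\<Sum>i\<in>J. min 0 (z i t)) \<le> 0" by (intro sum_nonpos) auto
      show "z' j t \<ge> C * (\<Sum>i\<in>J. min 0 (z i t))"
      proof (cases k)
        case True
        have Lneg: "L t p v < 0" using neg jj True unfolding z_def by auto
        have "C * (\<Sum>i\<in>J. min 0 (z i t)) \<le> (Bm * CS) * (\<Sum>i\<in>J. min 0 (z i t))"
          using sumnp Em unfolding C_def by (intro mult_right_mono_neg) auto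
        also have "\<dots> \<le> (Bm * CS) * (\<Sum>i\<in>(\<lambda>q. ((q,v),False)) ` {..<P}. min 0 (z i t))"
          using Bm CS v by (intro mult_left_mono sum_le_subset_nonpos finJ) (auto simp: J_def)
        also have "\<dots> = (\<Sum>q<P. Bm * CS * min 0 (I t q v))"
          by (subst sum.reindex) (auto simp: inj_on_def z_def sum_distrib_left)
        also have "\<dots> \<le> (\<Sum>q<P. beta p q v * I t q v * S t p)"
        proof (rule sum_mono)
          fix q assume q: "q \<in> {..<P}"
          have b0: "0 \<le> beta p q v * S t p" using beta_nn[of p q v] Snn'[OF p] p q v by auto
          have b1: "beta p q v * S t p \<le> Bm * CS"
            using Bm CS(2)[OF p t] p q v beta_nn[of p q v] Snn'[OF p]
            by (intro mult_mono) auto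
          have "Bm * CS * min 0 (I t q v) \<le> beta p q v * S t p * min 0 (I t q v)"
            using b1 by (intro mult_right_mono_neg) auto
          also have "\<dots> \<le> beta p q v * S t p * I t q v" using b0 by (intro mult_left_mono) auto
          finally show "Bm * CS * min 0 (I t q v) \<le> beta p q v * I t q v * S t p" by (simp add: mult_ac)
        qed
        also have "\<dots> \<le> dL t p v"
        proof -
          have "(eps p v + d p) * L t p v < 0"
            using Lneg eps_pos[OF p v] d_pos[OF p] by (intro mult_pos_neg) auto
          thus ?thesis unfolding dL_def sum_distrib_right by simp
        qed
        finally show ?thesis using jj True unfolding z'_def by simp
      next
        case False
        have Ineg: "I t p v < 0" using neg jj False unfolding z_def by auto
        have "C * (\<Sum>i\<in>J. min 0 (z i t)) \<le> Em * (\<Sum>i\<in>J. min 0 (z i t))"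
          using sumnp Bm CS unfolding C_def by (intro mult_right_mono_neg) auto
        also have "\<dots> \<le> Em * min 0 (z ((p,v),True) t)"
          using Em p v by (intro mult_left_mono sum_le_member finJ) (auto simp: J_def)
        also have "\<dots> = Em * min 0 (L t p v)" unfolding z_def by simp
        also have "\<dots> \<le> eps p v * min 0 (L t p v)"
          using Em(2) p v by (intro mult_right_mono_neg) auto
        also have "\<dots> \<le> eps p v * L t p v" using eps_pos[OF p v] by (intro mult_left_mono) auto
        also have "\<dots> \<le> dI t p v"
        proof -
          have "(gam p v + d p) * I t p v < 0"
            using Ineg gam_pos[OF p v] d_pos[OF p] by (intro mult_pos_neg) auto
          thus ?thesis unfolding dI_def by simp
        qed
        finally show ?thesis using jj False unfolding z'_def by simp
      qed
    qed
  qed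
  from main[of "((p,v),True)"] main[of "((p,v),False)"] p v show ?thesis
    unfolding J_def z_def by auto
qed

lemma Rnn: assumes p: "p < P" and t: "0 \<le> t" shows "R t p \<ge> 0"
proof (rule nonneg_sys[where J = "{..<P}" and z = "\<lambda>p t. R t p" and z' = "\<lambda>p t. dR t p"])
  fix T :: real
  show "\<exists>C\<ge>0. \<forall>t\<in>{0..T}. \<forall>j\<in>{..<P}. R t j < 0 \<longrightarrow> dR t j \<ge> C * (\<Sum>i\<in>{..<P}. min 0 (R t i))"
  proof (intro exI[of _ 0] conjI ballI impI)
    fix t j assume t: "t \<in> {0..T}" and j: "j \<in> {..<P}" and neg: "R t j < 0"
    have "0 \<le> (\<Sum>v<V. gam j v * I t j v)"
      using gam_pos LInn j t by (intro sum_nonneg mult_nonneg_nonneg) (auto simp: less_imp_le)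
    moreover have "d j * R t j < 0" using d_pos[of j] j neg by (intro mult_pos_neg) auto
    ultimately show "dR t j \<ge> 0 * (\<Sum>i\<in>{..<P}. min 0 (R t i))" unfolding dR_def by simp
  qed simp
qed (use derR om0 p t in auto)

definition "N t p = S t p + (\<Sum>v<V. L t p v + I t p v) + R t p"

lemma derN: assumes p: "p < P" and t: "0 \<le> t"
  shows "((\<lambda>\<tau>. N \<tau> p) has_real_derivative (b p - d p * N t p)) (at t within {0..})"
proof -
  have "((\<lambda>\<tau>. N \<tau> p) has_real_derivative (dS t p + (\<Sum>v<V. dL t p v + dI t p v) + dR t p)) (at t within {0..})"
    unfolding N_def
    by (intro DERIV_add DERIV_sum derS derL derI derR p t) auto
  moreover have "dS t p + (\<Sum>v<V. dL t p v + dI t p v) + dR t p = b p - d p * N t p"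
  proof -
    have e1: "(\<Sum>v<V. dL t p v + dI t p v) =
        (\<Sum>v<V. (\<Sum>q<P. beta p q v * I t q v) * S t p) - (\<Sum>v<V. d p * (L t p v + I t p v)) - (\<Sum>v<V. gam p v * I t p v)"
    proof -
      have "dL t p v + dI t p v = (\<Sum>q<P. beta p q v * I t q v) * S t p - d p * (L t p v + I t p v) - gam p v * I t p v" for v
        unfolding dL_def dI_def by (simp add: algebra_simps)
      thus ?thesis by (simp add: sum_subtractf)
    qed
    have e2: "(\<Sum>v<V. (\<Sum>q<P. beta p q v * I t q v) * S t p) = (\<Sum>q<P. \<Sum>v<V. beta p q v * I t q v) * S t p"
      by (simp add: sum_distrib_right sum.swap[of _ "{..<V}"])
    show ?thesis unfolding e1 e2 dS_def dR_def N_def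
      by (simp add: sum_distrib_left algebra_simps)
  qed
  ultimately show ?thesis by simp
qed

lemma N_le: assumes p: "p < P" and t: "0 \<le> t" shows "N t p \<le> S0 b d p"
proof -
  have "N t p - S0 b d p \<le> (N 0 p - S0 b d p) * exp (- d p * t)"
  proof (rule decay[where f = "\<lambda>t. N t p - S0 b d p" and f' = "\<lambda>t. b p - d p * N t p" and T = t])
    fix s :: real assume "0 \<le> s"
    thus "((\<lambda>t. N t p - S0 b d p) has_real_derivative b p - d p * N s p) (at s within {0..})"
      using derN[OF p] by (auto intro!: derivative_eq_intros)
  next
    fix s :: real
    show "b p - d p * N s p \<le> - d p * (N s p - S0 b d p)"
      unfolding S0_def using d_pos[OF p] by (simp add: algebra_simps)
  qed (use t in auto)
  also have "\<dots> \<le> 0"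
    using om0(5)[OF p] unfolding N_def S0_def by (intro mult_nonpos_nonneg) auto
  finally show ?thesis by simp
qed

definition "Wf x y t = (\<Sum>p<P. \<Sum>v<V. x p v * L t p v + y p v * I t p v)"
definition "Phi x y \<mu> t = (\<Sum>p<P. S0 b d p - N t p) + (\<Sum>p<P. R t p) + \<mu> * Wf x y t"

lemma Phi_decay:
  fixes x y :: "nat \<Rightarrow> nat \<Rightarrow> real" and \<kappa> \<mu> dm t :: real
  assumes xy: "\<forall>p<P. \<forall>v<V. x p v > 0 \<and> y p v > 0"
    and key: "\<forall>v<V. \<forall>Sv Lv Iv. (\<forall>p<P. 0 \<le> Sv p \<and> Sv p \<le> S0 b d p \<and> 0 \<le> Lv p \<and> 0 \<le> Iv p) \<longrightarrow>
      (\<Sum>p<P. x p v * ((\<Sum>q<P. beta p q v * Iv q) * Sv p - (eps p v + d p) * Lv p)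
             + y p v * (eps p v * Lv p - (gam p v + d p) * Iv p))
      \<le> - \<kappa> * (\<Sum>p<P. x p v * Lv p + y p v * Iv p)"
    and \<kappa>: "\<kappa> > 0" and \<mu>: "\<mu> > 0" and dm: "dm > 0" "\<forall>p<P. dm \<le> d p"
    and gamb: "\<forall>p<P. \<forall>v<V. gam p v \<le> \<mu> * (\<kappa> / 2) * y p v"
    and t: "0 \<le> t"
  shows "Phi x y \<mu> t \<le> Phi x y \<mu> 0 * exp (- min dm (\<kappa>/2) * t)"
proof (rule decay[where f = "Phi x y \<mu>" and T = t])
  fix s :: real assume s: "0 \<le> s"
  show "(Phi x y \<mu> has_real_derivative
      (\<Sum>p<P. - (b p - d p * N s p)) + (\<Sum>p<P. dR s p) + \<mu> * (\<Sum>p<P. \<Sum>v<V. x p v * dL s p v + y p v * dI s p v))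
      (at s within {0..})"
  proof -
    have dA: "((\<lambda>\<tau>. S0 b d p - N \<tau> p) has_real_derivative - (b p - d p * N s p)) (at s within {0..})"
      if p: "p < P" for p
      using DERIV_diff[OF DERIV_const derN[OF p s]] by simp
    show ?thesis
      unfolding Phi_def Wf_def
      by (intro DERIV_add DERIV_sum DERIV_cmult dA derR derL derI s) auto
  qed
next
  fix s :: real assume s: "0 \<le> s" "s \<le> t"
  define A where "A = (\<Sum>p<P. S0 b d p - N s p)"
  define B where "B = (\<Sum>p<P. R s p)"
  have A0: "A \<ge> 0" unfolding A_def using N_le s by (intro sum_nonneg) auto
  have B0: "B \<ge> 0" unfolding B_def using Rnn s by (intro sum_nonneg) auto
  have LI: "L s p v \<ge> 0" "I s p v \<ge> 0" if "p < P" "v < V" for p v using LInn[OF that] s by auto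
  have W0: "Wf x y s \<ge> 0" unfolding Wf_def using xy LI
    by (intro sum_nonneg add_nonneg_nonneg mult_nonneg_nonneg) (auto simp: less_imp_le)
  have a: "(\<Sum>p<P. - (b p - d p * N s p)) \<le> - dm * A"
  proof -
    have "(\<Sum>p<P. - (b p - d p * N s p)) = (\<Sum>p<P. - (d p * (S0 b d p - N s p)))"
    proof (intro sum.cong refl)
      fix p assume "p \<in> {..<P}"
      hence "d p > 0" using d_pos by auto
      thus "- (b p - d p * N s p) = - (d p * (S0 b d p - N s p))"
        by (simp add: S0_def algebra_simps)
    qed
    also have "\<dots> \<le> (\<Sum>p<P. - (dm * (S0 b d p - N s p)))"
      using dm N_le s by (intro sum_mono) (auto intro!: mult_right_mono)
    also have "\<dots> = - dm * A" unfolding A_def by (simp add: sum_distrib_left sum_negf)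
    finally show ?thesis .
  qed
  have gI: "(\<Sum>p<P. \<Sum>v<V. gam p v * I s p v) \<le> \<mu> * (\<kappa> / 2) * Wf x y s"
  proof -
    have "(\<Sum>p<P. \<Sum>v<V. gam p v * I s p v) \<le> (\<Sum>p<P. \<Sum>v<V. \<mu> * (\<kappa> / 2) * (x p v * L s p v + y p v * I s p v))"
    proof (intro sum_mono)
      fix p v assume p: "p \<in> {..<P}" and v: "v \<in> {..<V}"
      have "gam p v * I s p v \<le> \<mu> * (\<kappa> / 2) * y p v * I s p v"
        using gamb LI p v by (intro mult_right_mono) auto
      also have "\<dots> \<le> \<mu> * (\<kappa> / 2) * (x p v * L s p v + y p v * I s p v)"
      proof -
        have "0 \<le> \<mu> * (\<kappa> / 2) * (x p v * L s p v)"
          using \<mu> \<kappa> xy LI p v by (intro mult_nonneg_nonneg) (auto simp: less_imp_le)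
        thus ?thesis by (simp add: algebra_simps)
      qed
      finally show "gam p v * I s p v \<le> \<mu> * (\<kappa> / 2) * (x p v * L s p v + y p v * I s p v)" .
    qed
    also have "\<dots> = \<mu> * (\<kappa> / 2) * Wf x y s" unfolding Wf_def by (simp only: sum_distrib_left)
    finally show ?thesis .
  qed
  have bb: "(\<Sum>p<P. dR s p) \<le> \<mu> * (\<kappa> / 2) * Wf x y s - dm * B"
  proof -
    have "(\<Sum>p<P. dR s p) = (\<Sum>p<P. \<Sum>v<V. gam p v * I s p v) - (\<Sum>p<P. d p * R s p)"
      unfolding dR_def by (simp add: sum_subtractf)
    moreover have "(\<Sum>p<P. dm * R s p) \<le> (\<Sum>p<P. d p * R s p)"
      using dm Rnn s by (intro sum_mono mult_right_mono) auto
    moreover have "(\<Sum>p<P. dm * R s p) = dm * B" unfolding B_def by (simp add: sum_distrib_left)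
    ultimately show ?thesis using gI by linarith
  qed
  have c: "(\<Sum>p<P. \<Sum>v<V. x p v * dL s p v + y p v * dI s p v) \<le> - \<kappa> * Wf x y s"
  proof -
    have "(\<Sum>p<P. \<Sum>v<V. x p v * dL s p v + y p v * dI s p v) = (\<Sum>v<V. \<Sum>p<P. x p v * dL s p v + y p v * dI s p v)"
      by (rule sum.swap)
    also have "\<dots> \<le> (\<Sum>v<V. - \<kappa> * (\<Sum>p<P. x p v * L s p v + y p v * I s p v))"
    proof (rule sum_mono)
      fix v assume v: "v \<in> {..<V}"
      have st: "\<forall>p<P. 0 \<le> S s p \<and> S s p \<le> S0 b d p \<and> 0 \<le> L s p v \<and> 0 \<le> I s p v"
      proof (intro allI impI conjI)
        fix p assume p: "p < P"
        show "0 \<le> S s p" using Snn p s by auto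
        show "0 \<le> L s p v" "0 \<le> I s p v" using LI p v by auto
        have "S s p \<le> N s p" unfolding N_def using LI p v Rnn[OF p] s
          by (auto intro!: sum_nonneg add_nonneg_nonneg)
        thus "S s p \<le> S0 b d p" using N_le[OF p s(1)] by linarith
      qed
      have v': "v < V" using v by simp
      from mp[OF spec[OF spec[OF spec[OF mp[OF spec[OF key, of v] v'], of "\<lambda>p. S s p"], of "\<lambda>p. L s p v"], of "\<lambda>p. I s p v"] st]
      show "(\<Sum>p<P. x p v * dL s p v + y p v * dI s p v) \<le> - \<kappa> * (\<Sum>p<P. x p v * L s p v + y p v * I s p v)"
        unfolding dL_def dI_def by auto
    qed
    also have "\<dots> = - \<kappa> * Wf x y s" unfolding Wf_def
      by (simp only: sum_distrib_left[symmetric] sum.swap[of _ "{..<V}"])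
    finally show ?thesis .
  qed
  have "(\<Sum>p<P. - (b p - d p * N s p)) + (\<Sum>p<P. dR s p) + \<mu> * (\<Sum>p<P. \<Sum>v<V. x p v * dL s p v + y p v * dI s p v)
      \<le> - dm * A + (\<mu> * (\<kappa> / 2) * Wf x y s - dm * B) + \<mu> * (- \<kappa> * Wf x y s)"
    using a bb c \<mu> by (intro add_mono mult_left_mono) auto
  also have "\<dots> = - dm * A - dm * B - \<mu> * (\<kappa> / 2) * Wf x y s" by (simp add: algebra_simps)
  also have "\<dots> \<le> - min dm (\<kappa>/2) * A - min dm (\<kappa>/2) * B - min dm (\<kappa>/2) * (\<mu> * Wf x y s)"
  proof -
    have "min dm (\<kappa>/2) * A \<le> dm * A" using A0 by (intro mult_right_mono) auto
    moreover have "min dm (\<kappa>/2) * B \<le> dm * B" using B0 by (intro mult_right_mono) auto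
    moreover have "min dm (\<kappa>/2) * (\<mu> * Wf x y s) \<le> (\<kappa>/2) * (\<mu> * Wf x y s)"
      using W0 \<mu> by (intro mult_right_mono) auto
    ultimately show ?thesis by (simp add: algebra_simps)
  qed
  also have "\<dots> = - min dm (\<kappa>/2) * Phi x y \<mu> s" unfolding Phi_def A_def B_def by (simp add: algebra_simps)
  finally show "(\<Sum>p<P. - (b p - d p * N s p)) + (\<Sum>p<P. dR s p) + \<mu> * (\<Sum>p<P. \<Sum>v<V. x p v * dL s p v + y p v * dI s p v)
      \<le> - min dm (\<kappa>/2) * Phi x y \<mu> s" .
qed (use t in auto)

end


context sol begin

lemma dist_le:
  fixes x y :: "nat \<Rightarrow> nat \<Rightarrow> real" and \<mu> m t :: real
  assumes m: "m > 0" "\<forall>p<P. \<forall>v<V. m \<le> x p v \<and> m \<le> y p v" and \<mu>: "\<mu> > 0" and t: "0 \<le> t"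
  shows "dist_E0 P V b d (S t) (L t) (I t) (R t) \<le> (2 + 2 / (m * \<mu>)) * Phi x y \<mu> t"
proof -
  define A where "A = (\<Sum>p<P. S0 b d p - N t p)"
  define B where "B = (\<Sum>p<P. R t p)"
  define C where "C = (\<Sum>p<P. \<Sum>v<V. L t p v + I t p v)"
  have LI: "L t p v \<ge> 0" "I t p v \<ge> 0" if "p < P" "v < V" for p v using LInn[OF that t] by auto
  have A0: "A \<ge> 0" unfolding A_def using N_le t by (intro sum_nonneg) auto
  have B0: "B \<ge> 0" unfolding B_def using Rnn t by (intro sum_nonneg) auto
  have C0: "C \<ge> 0" unfolding C_def using LI by (intro sum_nonneg add_nonneg_nonneg) auto
  have mC: "m * C \<le> Wf x y t"
    unfolding C_def Wf_def sum_distrib_left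
  proof (intro sum_mono)
    fix p v assume p: "p \<in> {..<P}" and v: "v \<in> {..<V}"
    have "m * L t p v \<le> x p v * L t p v" using m LI p v by (intro mult_right_mono) auto
    moreover have "m * I t p v \<le> y p v * I t p v" using m LI p v by (intro mult_right_mono) auto
    ultimately show "m * (L t p v + I t p v) \<le> x p v * L t p v + y p v * I t p v"
      by (simp add: algebra_simps)
  qed
  have "dist_E0 P V b d (S t) (L t) (I t) (R t) = (\<Sum>p<P. (S0 b d p - N t p) + 2 * (\<Sum>v<V. L t p v + I t p v) + 2 * R t p)"
    unfolding dist_E0_def
  proof (intro sum.cong refl)
    fix p assume p: "p \<in> {..<P}"
    have Sle: "S t p \<le> S0 b d p"
    proof -
      have "S t p \<le> N t p" unfolding N_def using LI p Rnn[of p t] t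
        by (auto intro!: sum_nonneg add_nonneg_nonneg)
      moreover have "N t p \<le> S0 b d p" using N_le[of p t] p t by simp
      ultimately show ?thesis by linarith
    qed
    have "(\<Sum>v<V. \<bar>L t p v\<bar> + \<bar>I t p v\<bar>) = (\<Sum>v<V. L t p v + I t p v)"
      using LI p by (intro sum.cong refl) auto
    moreover have "\<bar>R t p\<bar> = R t p" using Rnn[of p t] p t by auto
    moreover have "\<bar>S t p - S0 b d p\<bar> = S0 b d p - S t p" using Sle by auto
    ultimately show "\<bar>S t p - S0 b d p\<bar> + (\<Sum>v<V. \<bar>L t p v\<bar> + \<bar>I t p v\<bar>) + \<bar>R t p\<bar> =
        (S0 b d p - N t p) + 2 * (\<Sum>v<V. L t p v + I t p v) + 2 * R t p"
      unfolding N_def by simp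
  qed
  also have "\<dots> = A + 2 * C + 2 * B" unfolding A_def B_def C_def
    by (simp add: sum.distrib sum_distrib_left)
  also have "\<dots> \<le> (2 + 2 / (m * \<mu>)) * (A + B + \<mu> * Wf x y t)"
  proof -
    have "2 * C \<le> 2 / (m * \<mu>) * (\<mu> * Wf x y t)"
    proof -
      have "2 / (m * \<mu>) * (\<mu> * Wf x y t) = 2 * (Wf x y t / m)" using \<mu> m by (simp add: field_simps)
      moreover have "C \<le> Wf x y t / m" using mC m by (simp add: pos_le_divide_eq mult.commute)
      ultimately show ?thesis by simp
    qed
    moreover have "0 \<le> 2 / (m * \<mu>) * (A + B)" using A0 B0 m \<mu> by auto
    moreover have "0 \<le> 2 * (\<mu> * Wf x y t)" using mC C0 m \<mu> by (simp add: mult_nonneg_nonneg order_trans[OF mult_nonneg_nonneg[OF less_imp_le[OF m(1)] C0]])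
    moreover have "(2 + 2 / (m * \<mu>)) * (A + B + \<mu> * Wf x y t) =
        2 * A + 2 * B + 2 * (\<mu> * Wf x y t) + 2 / (m * \<mu>) * (A + B) + 2 / (m * \<mu>) * (\<mu> * Wf x y t)"
      by (simp add: distrib_left distrib_right)
    ultimately show ?thesis using A0 B0 by linarith
  qed
  also have "\<dots> = (2 + 2 / (m * \<mu>)) * Phi x y \<mu> t" unfolding Phi_def A_def B_def ..
  finally show ?thesis .
qed

lemma Phi0_le:
  fixes x y :: "nat \<Rightarrow> nat \<Rightarrow> real" and \<mu> M :: real
  assumes M: "\<forall>p<P. \<forall>v<V. x p v \<le> M \<and> y p v \<le> M" "M \<ge> 0" and \<mu>: "\<mu> > 0"
  shows "Phi x y \<mu> 0 \<le> (1 + \<mu> * M) * dist_E0 P V b d (S 0) (L 0) (I 0) (R 0)"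
proof -
  define D1 where "D1 = (\<Sum>p<P. \<bar>S 0 p - S0 b d p\<bar>)"
  define D2 where "D2 = (\<Sum>p<P. \<Sum>v<V. \<bar>L 0 p v\<bar> + \<bar>I 0 p v\<bar>)"
  define D3 where "D3 = (\<Sum>p<P. \<bar>R 0 p\<bar>)"
  have dist: "dist_E0 P V b d (S 0) (L 0) (I 0) (R 0) = D1 + D2 + D3"
    unfolding dist_E0_def D1_def D2_def D3_def by (simp add: sum.distrib)
  have D0: "D1 \<ge> 0" "D2 \<ge> 0" "D3 \<ge> 0" unfolding D1_def D2_def D3_def
    by (intro sum_nonneg add_nonneg_nonneg abs_ge_zero)+
  have "(\<Sum>p<P. S0 b d p - N 0 p) \<le> D1" unfolding D1_def
  proof (intro sum_mono)
    fix p assume p: "p \<in> {..<P}"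
    have "0 \<le> (\<Sum>v<V. L 0 p v + I 0 p v) + R 0 p" using om0 p by (auto intro!: sum_nonneg add_nonneg_nonneg)
    thus "S0 b d p - N 0 p \<le> \<bar>S 0 p - S0 b d p\<bar>" unfolding N_def by linarith
  qed
  moreover have "(\<Sum>p<P. R 0 p) \<le> D3" unfolding D3_def by (intro sum_mono) auto
  moreover have "Wf x y 0 \<le> M * D2" unfolding Wf_def D2_def sum_distrib_left
  proof (intro sum_mono)
    fix p v assume p: "p \<in> {..<P}" and v: "v \<in> {..<V}"
    have "x p v * L 0 p v \<le> M * \<bar>L 0 p v\<bar>" using M om0 p v by (intro mult_mono) auto
    moreover have "y p v * I 0 p v \<le> M * \<bar>I 0 p v\<bar>" using M om0 p v by (intro mult_mono) auto
    ultimately show "x p v * L 0 p v + y p v * I 0 p v \<le> M * (\<bar>L 0 p v\<bar> + \<bar>I 0 p v\<bar>)"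
      by (simp add: algebra_simps)
  qed
  ultimately have "Phi x y \<mu> 0 \<le> D1 + D3 + \<mu> * (M * D2)" unfolding Phi_def using \<mu>
    by (smt (verit) mult_left_mono)
  also have "\<dots> \<le> (1 + \<mu> * M) * (D1 + D2 + D3)"
  proof -
    have "0 \<le> M" using M by simp
    hence "0 \<le> \<mu> * M * (D1 + D3)" using \<mu> D0 by auto
    moreover have "0 \<le> D2" by (rule D0)
    ultimately show ?thesis by (simp add: algebra_simps)
  qed
  finally show ?thesis using dist by simp
qed

end

context sys begin

lemma main_est:
  "\<exists>K \<kappa>0. \<kappa>0 > 0 \<and> K \<ge> 0 \<and> (\<forall>S L I R. is_solution P V b d eps gam beta S L I R \<longrightarrow>
     in_Omega P V b d (S 0) (L 0) (I 0) (R 0) \<longrightarrow>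
     (\<forall>t\<ge>0. dist_E0 P V b d (S t) (L t) (I t) (R t) \<le> K * dist_E0 P V b d (S 0) (L 0) (I 0) (R 0) * exp (- \<kappa>0 * t)))"
proof -
  from weights obtain x y \<kappa> where \<kappa>: "\<kappa> > 0" and xy: "\<forall>p<P. \<forall>v<V. x p v > 0 \<and> y p v > 0"
    and key: "\<forall>v<V. \<forall>Sv Lv Iv. (\<forall>p<P. 0 \<le> Sv p \<and> Sv p \<le> S0 b d p \<and> 0 \<le> Lv p \<and> 0 \<le> Iv p) \<longrightarrow>
      (\<Sum>p<P. x p v * ((\<Sum>q<P. beta p q v * Iv q) * Sv p - (eps p v + d p) * Lv p)
             + y p v * (eps p v * Lv p - (gam p v + d p) * Iv p))
      \<le> - \<kappa> * (\<Sum>p<P. x p v * Lv p + y p v * Iv p)"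
    by blast
  obtain m where m: "m > 0" "\<forall>pv\<in>{..<P}\<times>{..<V}. m \<le> min (x (fst pv) (snd pv)) (y (fst pv) (snd pv))"
    using fin_lower[of "{..<P}\<times>{..<V}" "\<lambda>pv. min (x (fst pv) (snd pv)) (y (fst pv) (snd pv))"] xy by auto
  obtain M where M: "M > 0" "\<forall>pv\<in>{..<P}\<times>{..<V}. max (x (fst pv) (snd pv)) (y (fst pv) (snd pv)) \<le> M"
    using fin_upper[of "{..<P}\<times>{..<V}" "\<lambda>pv. max (x (fst pv) (snd pv)) (y (fst pv) (snd pv))"] by auto
  obtain dm where dm: "dm > 0" "\<forall>p\<in>{..<P}. dm \<le> d p"
    using fin_lower[of "{..<P}" d] d_pos by auto
  obtain G where G: "G > 0" "\<forall>pv\<in>{..<P}\<times>{..<V}. gam (fst pv) (snd pv) / y (fst pv) (snd pv) \<le> G"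
    using fin_upper[of "{..<P}\<times>{..<V}" "\<lambda>pv. gam (fst pv) (snd pv) / y (fst pv) (snd pv)"] by auto
  define \<mu> where "\<mu> = 2 * G / \<kappa>"
  have \<mu>: "\<mu> > 0" unfolding \<mu>_def using G \<kappa> by auto
  have gamb: "\<forall>p<P. \<forall>v<V. gam p v \<le> \<mu> * (\<kappa> / 2) * y p v"
  proof (intro allI impI)
    fix p v assume p: "p < P" and v: "v < V"
    have "gam p v / y p v \<le> G" using G p v by auto
    hence "gam p v \<le> G * y p v" using xy p v by (simp add: pos_divide_le_eq)
    also have "G = \<mu> * (\<kappa> / 2)" unfolding \<mu>_def using \<kappa> by simp
    finally show "gam p v \<le> \<mu> * (\<kappa> / 2) * y p v" .
  qed
  define K where "K = (2 + 2 / (m * \<mu>)) * (1 + \<mu> * M)"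
  have K0: "K \<ge> 0" unfolding K_def using m \<mu> M by auto
  show ?thesis
  proof (rule exI[of _ K], rule exI[of _ "min dm (\<kappa>/2)"], intro conjI allI impI K0)
    show "min dm (\<kappa>/2) > 0" using dm \<kappa> by auto
    fix S L I R and t :: real
    assume s: "is_solution P V b d eps gam beta S L I R"
      and o: "in_Omega P V b d (S 0) (L 0) (I 0) (R 0)" and t: "0 \<le> t"
    interpret s: sol P V b d eps gam beta S L I R
      by (intro sol.intro sys_axioms sol_axioms.intro s o)
    have "dist_E0 P V b d (S t) (L t) (I t) (R t) \<le> (2 + 2 / (m * \<mu>)) * s.Phi x y \<mu> t"
      using m \<mu> t by (intro s.dist_le) auto
    also have "\<dots> \<le> (2 + 2 / (m * \<mu>)) * (s.Phi x y \<mu> 0 * exp (- min dm (\<kappa>/2) * t))"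
      using m \<mu> by (intro mult_left_mono s.Phi_decay[OF xy key \<kappa> \<mu> dm(1) _ gamb t]) (use dm in auto)
    also have "\<dots> \<le> (2 + 2 / (m * \<mu>)) * ((1 + \<mu> * M) * dist_E0 P V b d (S 0) (L 0) (I 0) (R 0) * exp (- min dm (\<kappa>/2) * t))"
      using m \<mu> M by (intro mult_left_mono mult_right_mono s.Phi0_le) auto
    also have "\<dots> = K * dist_E0 P V b d (S 0) (L 0) (I 0) (R 0) * exp (- min dm (\<kappa>/2) * t)"
      unfolding K_def by (simp add: mult_ac)
    finally show "dist_E0 P V b d (S t) (L t) (I t) (R t) \<le> K * dist_E0 P V b d (S 0) (L 0) (I 0) (R 0) * exp (- min dm (\<kappa>/2) * t)" .
  qed
qed

end

lemma dist_E0_nn: "dist_E0 P V b d s l i r \<ge> 0"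
  unfolding dist_E0_def by (intro sum_nonneg add_nonneg_nonneg abs_ge_zero)+

theorem mainTheorem3:
  fixes P V :: nat and b d :: "nat \<Rightarrow> real" and eps gam :: "nat \<Rightarrow> nat \<Rightarrow> real"
    and beta :: "nat \<Rightarrow> nat \<Rightarrow> nat \<Rightarrow> real"
  assumes "P \<ge> 1" and "V \<ge> 1"
    and "\<forall>p<P. b p > 0 \<and> d p > 0"
    and "\<forall>p<P. \<forall>v<V. eps p v > 0 \<and> gam p v > 0"
    and "\<forall>p<P. \<forall>q<P. \<forall>v<V. beta p q v \<ge> 0"
    and "R0 P V b d eps gam beta < 1"
  shows "E0_GAS_in_Omega P V b d eps gam beta"
proof -
  interpret sys P V b d eps gam beta using assms by unfold_locales
  obtain K \<kappa>0 where K: "\<kappa>0 > 0" "K \<ge> 0"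
    and est: "\<And>S L I R t. is_solution P V b d eps gam beta S L I R \<Longrightarrow>
     in_Omega P V b d (S 0) (L 0) (I 0) (R 0) \<Longrightarrow> 0 \<le> t \<Longrightarrow>
     dist_E0 P V b d (S t) (L t) (I t) (R t) \<le> K * dist_E0 P V b d (S 0) (L 0) (I 0) (R 0) * exp (- \<kappa>0 * t)"
    using main_est by blast
  show ?thesis unfolding E0_GAS_in_Omega_def
  proof (intro conjI allI impI)
    fix \<epsilon> :: real assume e: "\<epsilon> > 0"
    show "\<exists>\<delta>>0. \<forall>S L I R. is_solution P V b d eps gam beta S L I R \<longrightarrow>
        in_Omega P V b d (S 0) (L 0) (I 0) (R 0) \<longrightarrow>
        dist_E0 P V b d (S 0) (L 0) (I 0) (R 0) < \<delta> \<longrightarrow>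
        (\<forall>t\<ge>0. dist_E0 P V b d (S t) (L t) (I t) (R t) < \<epsilon>)"
    proof (intro exI[of _ "\<epsilon> / (K + 1)"] conjI allI impI)
      show "\<epsilon> / (K + 1) > 0" using e K by auto
      fix S L I R and t :: real
      assume s: "is_solution P V b d eps gam beta S L I R"
        and o: "in_Omega P V b d (S 0) (L 0) (I 0) (R 0)"
        and dl: "dist_E0 P V b d (S 0) (L 0) (I 0) (R 0) < \<epsilon> / (K + 1)" and t: "0 \<le> t"
      define D where "D = dist_E0 P V b d (S 0) (L 0) (I 0) (R 0)"
      have D0: "D \<ge> 0" unfolding D_def by (rule dist_E0_nn)
      have "dist_E0 P V b d (S t) (L t) (I t) (R t) \<le> K * D * exp (- \<kappa>0 * t)"
        unfolding D_def by (rule est[OF s o t])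
      also have "\<dots> \<le> K * D * 1"
        using K t D0 by (intro mult_left_mono) auto
      also have "\<dots> \<le> K * (\<epsilon> / (K + 1))" using dl K D0 unfolding D_def
        by (simp only: mult_1_right) (intro mult_left_mono, auto)
      also have "\<dots> < \<epsilon>" using K e by (simp add: field_simps)
      finally show "dist_E0 P V b d (S t) (L t) (I t) (R t) < \<epsilon>" .
    qed
  next
    fix S L I R
    assume s: "is_solution P V b d eps gam beta S L I R"
      and o: "in_Omega P V b d (S 0) (L 0) (I 0) (R 0)"
    define D where "D = dist_E0 P V b d (S 0) (L 0) (I 0) (R 0)"
    have lim: "((\<lambda>t. K * D * exp (- \<kappa>0 * t)) \<longlongrightarrow> 0) at_top"
      using K(1) by real_asymp
    show "((\<lambda>t. dist_E0 P V b d (S t) (L t) (I t) (R t)) \<longlongrightarrow> 0) at_top"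
    proof (rule tendsto_sandwich[OF _ _ tendsto_const lim])
      show "\<forall>\<^sub>F t in at_top. 0 \<le> dist_E0 P V b d (S t) (L t) (I t) (R t)"
        by (intro always_eventually allI dist_E0_nn)
      show "\<forall>\<^sub>F t in at_top. dist_E0 P V b d (S t) (L t) (I t) (R t) \<le> K * D * exp (- \<kappa>0 * t)"
        using eventually_ge_at_top[of "0::real"]
        by eventually_elim (use est[OF s o] in \<open>auto simp: D_def\<close>)
    qed
  qed
qed


end
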